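(* Let $T$ be a rooted tree with root $r$ in which every node $u$ carries a positive integer $w(u)$ such that $w(u)\ge\sum_{v\in C(u)} w(v)$ for every node $u$, where $C(u)$ is the set of children of $u$. For an internal node $u$ with at least two children, let $\mathrm{SecW}(u)$ denote the second largest value in the multiset $\{w(v): v\in C(u)\}$, and let $\mathrm{SecW}(u)=0$ if $u$ has fewer than two children. Let $x>0$ and let $A$ be the set of nodes $u$ of $T$ with $\mathrm{SecW}(u)>x$. Then $|A| < w(r)/x$. *)

theory Defs
  imports Complex_Main "HOL-Library.Multiset"
begin

text \<open>The edges are v -- parent v for v \<noteq> r.\<close>
definition rooted_tree :: "'a set \<Rightarrow> 'a \<Rightarrow> ('a \<Rightarrow> 'a) \<Rightarrow> bool" where
  "rooted_tree V r par \<longleftrightarrow> finite V \<and> r \<in> V \<and>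
     (\<forall>v \<in> V - {r}. par v \<in> V) \<and>
     (\<forall>v \<in> V. \<exists>n. (par ^^ n) v = r)"

definition children :: "'a set \<Rightarrow> 'a \<Rightarrow> ('a \<Rightarrow> 'a) \<Rightarrow> 'a \<Rightarrow> 'a set" where
  "children V r par u = {v \<in> V. v \<noteq> r \<and> par v = u}"

definition second_largest :: "nat multiset \<Rightarrow> nat" where
  "second_largest M = (if size M \<ge> 2 then sorted_list_of_multiset M ! (size M - 2) else 0)"

definition SecW :: "'a set \<Rightarrow> 'a \<Rightarrow> ('a \<Rightarrow> 'a) \<Rightarrow> ('a \<Rightarrow> nat) \<Rightarrow> 'a \<Rightarrow> nat" where
  "SecW V r par w u = second_largest (image_mset w (mset_set (children V r par u)))"

end

theory Submission
  imports Defs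
begin

lemma second_largest_two:
  assumes "size M \<ge> 2"
  shows "size (filter_mset (\<lambda>y. y \<ge> second_largest M) M) \<ge> 2"
proof -
  define L where "L = sorted_list_of_multiset M"
  define n where "n = size M"
  have len: "length L = n" unfolding L_def n_def
    by (metis mset_sorted_list_of_multiset size_mset)
  have srt: "sorted L" unfolding L_def by simp
  have s: "second_largest M = L ! (n - 2)" using assms unfolding second_largest_def L_def n_def by simp
  have "size (filter_mset (\<lambda>y. y \<ge> second_largest M) M) = length (filter (\<lambda>y. y \<ge> second_largest M) L)"
    by (metis L_def mset_filter mset_sorted_list_of_multiset size_mset)
  hence "size (filter_mset (\<lambda>y. y \<ge> second_largest M) M) = card {i. i < n \<and> L ! i \<ge> second_largest M}"
    by (simp add: length_filter_conv_card len)
  moreover have "{n-2, n-1} \<subseteq> {i. i < n \<and> L ! i \<ge> second_largest M}"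
    using assms srt len s unfolding n_def by (auto intro: sorted_nth_mono)
  moreover have "card {n-2, n-1} = 2" using assms unfolding n_def by simp
  moreover have "finite {i. i < n \<and> L ! i \<ge> second_largest M}" by simp
  ultimately show ?thesis using card_mono by metis
qed

locale rtree =
  fixes V :: "'a set" and r :: 'a and par :: "'a \<Rightarrow> 'a"
  assumes rt: "rooted_tree V r par"
begin

definition d :: "'a \<Rightarrow> nat" where "d v = (LEAST n. (par ^^ n) v = r)"

lemma finV: "finite V" and rV: "r \<in> V" and parV: "v \<in> V \<Longrightarrow> v \<noteq> r \<Longrightarrow> par v \<in> V"
  and reach: "v \<in> V \<Longrightarrow> \<exists>n. (par ^^ n) v = r"
  using rt unfolding rooted_tree_def by auto

lemma d_r: "d r = 0" unfolding d_def by simp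

lemma d_reach: assumes "v \<in> V" shows "(par ^^ d v) v = r"
proof -
  obtain n where "(par ^^ n) v = r" using reach[OF assms] by blast
  thus ?thesis unfolding d_def by (rule LeastI)
qed

lemma d_par: assumes "v \<in> V" "v \<noteq> r" shows "d v = Suc (d (par v))"
proof -
  have h: "(par ^^ d v) v = r" using d_reach assms by blast
  have "d v \<noteq> 0" using h assms by (metis funpow_0)
  then obtain m where m: "d v = Suc m" by (cases "d v") auto
  have "(par ^^ m) (par v) = r" using h m by (simp add: funpow_Suc_right del: funpow.simps)
  hence le1: "d (par v) \<le> m" unfolding d_def by (rule Least_le)
  have "(par ^^ d (par v)) (par v) = r" unfolding d_def using \<open>(par ^^ m) (par v) = r\<close> by (rule LeastI)
  hence "(par ^^ Suc (d (par v))) v = r" by (simp add: funpow_Suc_right del: funpow.simps)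
  hence "d v \<le> Suc (d (par v))" unfolding d_def by (rule Least_le)
  thus ?thesis using le1 m by simp
qed

lemma anc: "v \<in> V \<Longrightarrow> k \<le> d v \<Longrightarrow> (par ^^ k) v \<in> V \<and> d ((par ^^ k) v) = d v - k"
proof (induction k)
  case 0 then show ?case by simp
next
  case (Suc k)
  then have IH: "(par ^^ k) v \<in> V" "d ((par ^^ k) v) = d v - k" by auto
  have ne: "(par ^^ k) v \<noteq> r" using IH Suc.prems d_r by auto
  have e: "(par ^^ Suc k) v = par ((par ^^ k) v)" by simp
  have "d ((par ^^ Suc k) v) = d v - Suc k" unfolding e using d_par[OF IH(1) ne] IH(2) by linarith
  then show ?case using parV[OF IH(1) ne] e by simp
qed

definition D :: "'a \<Rightarrow> 'a set" where
  "D u = {v \<in> V. d u \<le> d v \<and> (par ^^ (d v - d u)) v = u}"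

definition C :: "'a \<Rightarrow> 'a set" where "C u = children V r par u"

lemma D_sub: "D u \<subseteq> V" unfolding D_def by auto

lemma D_r: "D r = V" unfolding D_def using d_r d_reach by auto

lemma u_in_D: "u \<in> V \<Longrightarrow> u \<in> D u" unfolding D_def by simp

lemma C_d: "c \<in> C u \<Longrightarrow> c \<in> V \<and> d c = Suc (d u) \<and> c \<noteq> r \<and> par c = u"
  unfolding C_def children_def using d_par by auto

lemma D_decomp: assumes "u \<in> V" shows "D u = insert u (\<Union> (D ` C u))"
proof
  show "D u \<subseteq> insert u (\<Union> (D ` C u))"
  proof
    fix v assume v: "v \<in> D u"
    show "v \<in> insert u (\<Union> (D ` C u))"
    proof (cases "v = u")
      case False
      have vV: "v \<in> V" and le: "d u \<le> d v" and eq: "(par ^^ (d v - d u)) v = u"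
        using v unfolding D_def by auto
      have "d v \<noteq> d u" using eq False by (metis diff_self_eq_0 funpow_0)
      define k where "k = d v - d u - 1"
      define c where "c = (par ^^ k) v"
      have kk: "d v - d u = Suc k" using le \<open>d v \<noteq> d u\<close> unfolding k_def by simp
      have cV: "c \<in> V" and dc: "d c = d v - k" using anc[OF vV, of k] kk unfolding c_def by auto
      have "d c = Suc (d u)" using dc kk by simp
      hence cr: "c \<noteq> r" using d_r by auto
      have pc: "par c = u" using eq kk unfolding c_def by simp
      have "c \<in> C u" using cV cr pc unfolding C_def children_def by simp
      moreover have "v \<in> D c" unfolding D_def using vV dc kk c_def by auto
      ultimately show ?thesis by blast
    qed (simp)
  qed
next
  show "insert u (\<Union> (D ` C u)) \<subseteq> D u"
  proof
    fix v assume "v \<in> insert u (\<Union> (D ` C u))"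
    then consider "v = u" | c where "c \<in> C u" "v \<in> D c" by blast
    then show "v \<in> D u"
    proof cases
      case 1 then show ?thesis using u_in_D assms by simp
    next
      case 2
      have c: "c \<in> V" "d c = Suc (d u)" "par c = u" using C_d[OF 2(1)] by auto
      have vV: "v \<in> V" "d c \<le> d v" "(par ^^ (d v - d c)) v = c" using 2(2) unfolding D_def by auto
      have "d v - d u = Suc (d v - d c)" using c vV by simp
      hence "(par ^^ (d v - d u)) v = u" using vV c by simp
      thus ?thesis using vV c unfolding D_def by simp
    qed
  qed
qed

lemma D_disj: assumes "c1 \<in> C u" "c2 \<in> C u" "c1 \<noteq> c2" shows "D c1 \<inter> D c2 = {}"
proof -
  have "d c1 = d c2" using C_d assms by simp
  thus ?thesis using assms(3) unfolding D_def by auto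
qed

lemma u_notin: "c \<in> C u \<Longrightarrow> u \<notin> D c"
  using C_d unfolding D_def by auto

lemma finC: "finite (C u)" unfolding C_def children_def using finV by simp

lemma card_decomp:
  assumes "u \<in> V"
  shows "card (A \<inter> D u) = (if u \<in> A then 1 else 0) + (\<Sum>c\<in>C u. card (A \<inter> D c))"
proof -
  have finD: "finite (D c)" for c using D_sub finV finite_subset by blast
  have "A \<inter> D u = (A \<inter> {u}) \<union> (\<Union>c\<in>C u. A \<inter> D c)"
    using D_decomp[OF assms] by auto
  moreover have "(A \<inter> {u}) \<inter> (\<Union>c\<in>C u. A \<inter> D c) = {}" using u_notin by auto
  moreover have "card (\<Union>c\<in>C u. A \<inter> D c) = (\<Sum>c\<in>C u. card (A \<inter> D c))"
  proof (rule card_UN_disjoint)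
    show "finite (C u)" by (rule finC)
    show "\<forall>c\<in>C u. finite (A \<inter> D c)" using finD by simp
    show "\<forall>c1\<in>C u. \<forall>c2\<in>C u. c1 \<noteq> c2 \<longrightarrow> A \<inter> D c1 \<inter> (A \<inter> D c2) = {}"
      using D_disj[of _ u] by blast
  qed
  ultimately have "card (A \<inter> D u) = card (A \<inter> {u}) + (\<Sum>c\<in>C u. card (A \<inter> D c))"
    using finC finD by (simp add: card_Un_disjoint)
  thus ?thesis by auto
qed

end

theorem lemma3:
  fixes V :: "'a set" and r :: 'a and par :: "'a \<Rightarrow> 'a"
    and w :: "'a \<Rightarrow> nat" and x :: real
  assumes "rooted_tree V r par"
    and "\<And>u. u \<in> V \<Longrightarrow> w u > 0"
    and "\<And>u. u \<in> V \<Longrightarrow> w u \<ge> (\<Sum>v\<in>children V r par u. w v)"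
    and "x > 0"
  shows "real (card {u \<in> V. real (SecW V r par w u) > x}) < real (w r) / x"
proof -
  interpret rtree V r par using assms(1) by unfold_locales
  define A where "A = {u \<in> V. real (SecW V r par w u) > x}"
  define f where "f u = card (A \<inter> D u)" for u
  define g where "g u = x * (real (f u) + (if f u > 0 then 1 else 0))" for u
  define H where "H = Max (d ` V)"
  have xfg: "x * real (f u) \<le> g u" for u unfolding g_def using assms(4) by (simp add: algebra_simps)
  have key: "u \<in> V \<longrightarrow> g u < real (w u)" for u
  proof (induction u rule: measure_induct_rule[of "\<lambda>u. H - d u"])
    case (less u)
    show ?case
    proof
      assume uV: "u \<in> V"
      have IHc: "g c < real (w c)" if c: "c \<in> C u" for c
      proof -
        have cc: "c \<in> V" "d c = Suc (d u)" using C_d[OF c] by auto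
        have "d c \<le> H" unfolding H_def using Max_ge[OF finite_imageI[OF finV] imageI[OF cc(1)]] .
        hence "H - d c < H - d u" using cc by simp
        thus ?thesis using less cc by blast
      qed
      have xf: "x * real (f c) < real (w c)" if "c \<in> C u" for c
        using IHc[OF that] xfg[of c] by linarith
      have fu: "f u = (if u \<in> A then 1 else 0) + (\<Sum>c\<in>C u. f c)"
        unfolding f_def using card_decomp[OF uV] by simp
      have wsum: "(\<Sum>c\<in>C u. real (w c)) \<le> real (w u)"
        using assms(3)[OF uV] unfolding C_def by (metis of_nat_le_iff of_nat_sum)
      show "g u < real (w u)"
      proof (cases "u \<in> A")
        case True
        define s where "s = SecW V r par w u"
        have sx: "real s > x" using True unfolding A_def s_def by simp
        define M where "M = image_mset w (mset_set (C u))"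
        have sM: "s = second_largest M" unfolding s_def M_def SecW_def C_def by simp
        have "size M \<ge> 2"
        proof (rule ccontr)
          assume "\<not> 2 \<le> size M"
          hence "s = 0" unfolding sM second_largest_def by simp
          thus False using sx assms(4) by simp
        qed
        from second_largest_two[OF this] have sz: "size (filter_mset (\<lambda>y. y \<ge> s) M) \<ge> 2"
          using sM by simp
        define B where "B = {c \<in> C u. w c \<ge> s}"
        have "filter_mset (\<lambda>y. y \<ge> s) M = image_mset w (mset_set B)"
          unfolding M_def B_def by (simp add: filter_mset_image_mset finC)
        hence cB: "card B \<ge> 2" using sz by simp
        have BC: "B \<subseteq> C u" unfolding B_def by auto
        have finB: "finite B" using finC BC finite_subset by blast
        have Bne: "B \<noteq> {}" using cB by auto
        have xB: "x * (real (f c) + 1) < real (w c)" if "c \<in> B" for c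
        proof (cases "f c > 0")
          case True
          thus ?thesis using IHc[of c] that BC unfolding g_def by auto
        next
          case False
          have "real (w c) \<ge> real s" using that unfolding B_def by simp
          thus ?thesis using False sx by simp
        qed
        have "(\<Sum>c\<in>B. x * (real (f c) + 1)) < (\<Sum>c\<in>B. real (w c))"
          by (rule sum_strict_mono[OF finB Bne xB])
        moreover have "(\<Sum>c\<in>B. x * (real (f c) + 1)) = (\<Sum>c\<in>B. x * real (f c)) + x * real (card B)"
          by (simp add: sum.distrib algebra_simps sum_distrib_left)
        moreover have "(\<Sum>c\<in>C u - B. x * real (f c)) \<le> (\<Sum>c\<in>C u - B. real (w c))"
          by (rule sum_mono) (use xf in force)
        moreover have "(\<Sum>c\<in>C u. real (w c)) = (\<Sum>c\<in>B. real (w c)) + (\<Sum>c\<in>C u - B. real (w c))"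
          by (metis BC add.commute finC sum.subset_diff)
        moreover have "(\<Sum>c\<in>C u. x * real (f c)) = (\<Sum>c\<in>B. x * real (f c)) + (\<Sum>c\<in>C u - B. x * real (f c))"
          by (metis BC add.commute finC sum.subset_diff)
        moreover have "x * real (card B) \<ge> x * 2" using cB assms(4) by simp
        ultimately have "x * 2 + (\<Sum>c\<in>C u. x * real (f c)) < real (w u)" using wsum by linarith
        moreover have "g u = x * 2 + (\<Sum>c\<in>C u. x * real (f c))"
          unfolding g_def using fu True by (simp add: sum_distrib_left algebra_simps)
        ultimately show ?thesis by simp
      next
        case False
        hence fu2: "f u = (\<Sum>c\<in>C u. f c)" using fu by simp
        show ?thesis
        proof (cases "f u = 0")
          case True
          thus ?thesis unfolding g_def using assms(2)[OF uV] by simp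
        next
          case nz: False
          then obtain c0 where c0: "c0 \<in> C u" "f c0 > 0" using fu2
            by (metis gr0I sum.neutral)
          have Cne: "C u \<noteq> {}" using c0 by auto
          have "(\<Sum>c\<in>C u. g c) < (\<Sum>c\<in>C u. real (w c))"
            by (rule sum_strict_mono[OF finC Cne IHc])
          moreover have "(\<Sum>c\<in>C u. g c) = (\<Sum>c\<in>C u. x * real (f c)) + (\<Sum>c\<in>C u. x * (if f c > 0 then 1 else 0))"
            unfolding g_def by (simp add: sum.distrib algebra_simps)
          moreover have "x * (if f c0 > 0 then 1 else 0) \<le> (\<Sum>c\<in>C u. x * (if f c > 0 then 1 else 0))"
            by (rule member_le_sum[OF c0(1) _ finC]) (use assms(4) in simp)
          moreover have "g u = (\<Sum>c\<in>C u. x * real (f c)) + x"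
            unfolding g_def using fu2 nz by (simp add: sum_distrib_left distrib_left)
          ultimately show ?thesis using c0 wsum by simp
        qed
      qed
    qed
  qed
  have "A \<inter> D r = A" unfolding D_r A_def by auto
  hence "f r = card A" unfolding f_def by simp
  hence "x * real (card A) < real (w r)" using key[of r] rV xfg[of r] by simp
  thus ?thesis unfolding A_def using assms(4) by (simp add: pos_less_divide_eq mult.commute)
qed

end
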